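(* Let $B$ be an $n\times n$ random matrix whose entries are independent Bernoulli random variables with mean $p\in[0,1]$, and let $\varepsilon\in(0,1/2]$. Then with probability at least $1-\exp(-\varepsilon n/2)$, the total number of ones contained in those rows of $B$ that have more than $21pn+2\ln(\varepsilon^{-1})$ ones is at most $\varepsilon n$. *)

theory Defs
  imports "HOL-Probability.Probability"
begin

definition bernoulli_matrix :: "nat \<Rightarrow> real \<Rightarrow> (nat \<times> nat \<Rightarrow> bool) pmf" where
  "bernoulli_matrix n p = Pi_pmf ({..<n} \<times> {..<n}) False (\<lambda>_. bernoulli_pmf p)"

definition row_ones :: "nat \<Rightarrow> (nat \<times> nat \<Rightarrow> bool) \<Rightarrow> nat \<Rightarrow> nat" where
  "row_ones n B i = card {j. j < n \<and> B (i, j)}"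

definition heavy_row_ones :: "nat \<Rightarrow> real \<Rightarrow> (nat \<times> nat \<Rightarrow> bool) \<Rightarrow> nat" where
  "heavy_row_ones n t B = (\<Sum>i\<in>{i. i < n \<and> real (row_ones n B i) > t}. row_ones n B i)"

end

theory Submission
  imports Defs
begin

lemma fin_Pi_bool: "finite A \<Longrightarrow> finite (set_pmf (Pi_pmf A dflt (q :: 'a \<Rightarrow> bool pmf)))"
  by (rule finite_subset[OF set_Pi_pmf_subset']) (auto intro!: finite_PiE_dflt)

lemma row_expect:
  fixes I J :: "nat set" and q :: "bool pmf" and g :: "bool \<Rightarrow> real" and c :: real
  assumes fin: "finite I" "finite J" and gnn: "\<And>b. g b \<ge> 0"
  shows "measure_pmf.expectation (Pi_pmf (I \<times> J) False (\<lambda>_. q))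
           (\<lambda>B. \<Prod>i\<in>I. c * (\<Prod>j\<in>J. g (B (i,j))) + 1)
         = (\<Prod>i\<in>I. c * (\<Prod>j\<in>J. measure_pmf.expectation q g) + 1)"
proof -
  let ?M = "Pi_pmf (I \<times> J) False (\<lambda>_. q)"
  have finM: "finite (set_pmf ?M)" using fin by (intro fin_Pi_bool) auto
  have finq: "finite (set_pmf q)" by (rule finite_subset[of _ UNIV]) auto
  define F where "F X k b = (if fst k \<in> X then g b else 1)" for X :: "nat set" and k :: "nat \<times> nat" and b
  have Fe: "F X (i,j) = (if i \<in> X then g else (\<lambda>_. 1))" for X i j
    by (auto simp: F_def fun_eq_iff)
  have key: "(\<Prod>i\<in>X. c * (\<Prod>j\<in>J. g (B (i,j)))) = c ^ card X * (\<Prod>k\<in>I \<times> J. F X k (B k))"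
    if "X \<subseteq> I" for X B
  proof -
    have "(\<Prod>k\<in>I \<times> J. F X k (B k)) = (\<Prod>i\<in>I. \<Prod>j\<in>J. F X (i,j) (B (i,j)))"
      by (simp add: prod.cartesian_product)
    also have "\<dots> = (\<Prod>i\<in>I. if i \<in> X then (\<Prod>j\<in>J. g (B (i,j))) else 1)"
      by (intro prod.cong) (auto simp: F_def)
    also have "\<dots> = (\<Prod>i\<in>I \<inter> X. (\<Prod>j\<in>J. g (B (i,j))))"
      using fin by (simp add: prod.inter_restrict)
    also have "I \<inter> X = X" using that by auto
    finally show ?thesis by (simp add: prod.distrib)
  qed
  have key2: "(\<Prod>i\<in>X. c * (\<Prod>j\<in>J. measure_pmf.expectation q g)) = c ^ card X * (\<Prod>k\<in>I \<times> J. measure_pmf.expectation q (F X k))"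
    if "X \<subseteq> I" for X
  proof -
    have "(\<Prod>k\<in>I \<times> J. measure_pmf.expectation q (F X k)) = (\<Prod>i\<in>I. \<Prod>j\<in>J. measure_pmf.expectation q (F X (i,j)))"
      by (simp add: prod.cartesian_product)
    also have "\<dots> = (\<Prod>i\<in>I. if i \<in> X then (\<Prod>j\<in>J. measure_pmf.expectation q g) else 1)"
      by (intro prod.cong) (auto simp: Fe)
    also have "\<dots> = (\<Prod>i\<in>I \<inter> X. (\<Prod>j\<in>J. measure_pmf.expectation q g))"
      using fin(1) by (rule prod.inter_restrict[symmetric])
    also have "I \<inter> X = X" using that by auto
    finally show ?thesis by (simp add: prod.distrib power_mult_distrib)
  qed
  have "measure_pmf.expectation ?M (\<lambda>B. \<Prod>i\<in>I. c * (\<Prod>j\<in>J. g (B (i,j))) + 1)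
      = measure_pmf.expectation ?M (\<lambda>B. \<Sum>X\<in>Pow I. c ^ card X * (\<Prod>k\<in>I \<times> J. F X k (B k)))"
    using fin by (intro Bochner_Integration.integral_cong refl) (simp add: prod_add key)
  also have "\<dots> = (\<Sum>X\<in>Pow I. c ^ card X * measure_pmf.expectation ?M (\<lambda>B. \<Prod>k\<in>I \<times> J. F X k (B k)))"
    using finM by (subst Bochner_Integration.integral_sum) (auto intro: integrable_measure_pmf_finite)
  also have "\<dots> = (\<Sum>X\<in>Pow I. c ^ card X * (\<Prod>k\<in>I \<times> J. measure_pmf.expectation q (F X k)))"
    using fin finq by (intro sum.cong refl arg_cong2[where f="(*)"] expectation_prod_Pi_pmf)
       (auto intro: integrable_measure_pmf_finite simp: F_def gnn)
  also have "\<dots> = (\<Prod>i\<in>I. c * (\<Prod>j\<in>J. measure_pmf.expectation q g) + 1)"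
    by (subst prod_add[OF fin(1)]) (intro sum.cong refl, simp only: key2[symmetric] Pow_iff prod.neutral_const mult_1_right)
  finally show ?thesis .
qed

lemma exp2_le: "exp (2::real) \<le> 9"
proof -
  have "exp (2::real) = exp 1 * exp 1" by (simp flip: exp_add)
  also have "\<dots> \<le> 3 * 3" using exp_le by (intro mult_mono) auto
  finally show ?thesis by simp
qed

lemma row_ones_exp:
  "(\<Prod>j\<in>{..<n}. (if B (i,j) then exp 2 else 1)) = exp (2 * real (row_ones n B i))"
proof -
  have "(\<Prod>j\<in>{..<n}. (if B (i,j) then exp 2 else 1)) = (\<Prod>j\<in>{..<n} \<inter> {j. B (i,j)}. exp (2::real))"
    by (subst prod.inter_restrict) auto
  also have "\<dots> = exp 2 ^ row_ones n B i"
    by (simp add: row_ones_def Int_def)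
  also have "\<dots> = exp (2 * real (row_ones n B i))"
    by (simp add: exp_of_nat_mult[symmetric] mult.commute)
  finally show ?thesis .
qed

theorem mainTheorem14:
  fixes n :: nat and p \<epsilon> :: real
  assumes "0 \<le> p" "p \<le> 1" "0 < \<epsilon>" "\<epsilon> \<le> 1/2"
  shows "measure_pmf.prob (bernoulli_matrix n p)
           {B. real (heavy_row_ones n (21 * p * real n + 2 * ln (1 / \<epsilon>)) B) \<le> \<epsilon> * real n}
         \<ge> 1 - exp (- \<epsilon> * real n / 2)"
proof -
  define t where "t = 21 * p * real n + 2 * ln (1 / \<epsilon>)"
  define c where "c = exp (- t)"
  define g where "g = (\<lambda>b::bool. if b then exp 2 else (1::real))"
  define M where "M = bernoulli_matrix n p"
  define S where "S = (\<lambda>B. real (heavy_row_ones n t B))"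
  define H where "H = (\<lambda>B::nat\<times>nat\<Rightarrow>bool. \<Prod>i\<in>{..<n}. c * (\<Prod>j\<in>{..<n}. g (B (i,j))) + 1)"
  have cpos: "c > 0" by (simp add: c_def)
  have finM: "finite (set_pmf M)" unfolding M_def bernoulli_matrix_def by (intro fin_Pi_bool) auto
  have Hrow: "(\<Prod>j\<in>{..<n}. g (B (i,j))) = exp (2 * real (row_ones n B i))" for B i
    unfolding g_def by (rule row_ones_exp)
  have pw: "exp (S B) \<le> H B" for B
  proof -
    let ?X = "\<lambda>i. real (row_ones n B i)"
    define Hv where "Hv = {i. i < n \<and> ?X i > t}"
    have "exp (S B) = (\<Prod>i\<in>Hv. exp (?X i))"
      by (simp add: S_def heavy_row_ones_def Hv_def exp_sum)
    also have "\<dots> \<le> (\<Prod>i\<in>Hv. c * exp (2 * ?X i) + 1)"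
    proof (rule prod_mono, safe)
      fix i assume "i \<in> Hv"
      hence "?X i > t" by (simp add: Hv_def)
      hence "exp (?X i) \<le> exp (2 * ?X i - t)" by simp
      also have "\<dots> = c * exp (2 * ?X i)" by (simp add: c_def exp_diff exp_minus field_simps)
      finally show "exp (?X i) \<le> c * exp (2 * ?X i) + 1" by simp
    qed simp
    also have "\<dots> \<le> (\<Prod>i\<in>{..<n}. c * exp (2 * ?X i) + 1)"
      using cpos by (intro prod_mono2) (auto simp: Hv_def intro: add_nonneg_nonneg mult_nonneg_nonneg)
    also have "\<dots> = H B" by (simp add: H_def Hrow)
    finally show ?thesis .
  qed
  have Eg: "measure_pmf.expectation (bernoulli_pmf p) g = 1 + p * (exp 2 - 1)"
    using assms by (simp add: g_def algebra_simps)
  have Eg_le: "1 + p * (exp 2 - 1) \<le> exp (8 * p)"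
  proof -
    have "1 + p * (exp 2 - 1) \<le> 1 + 8 * p" using exp2_le assms mult_left_mono[of "exp 2 - 1" 8 p] by linarith
    also have "\<dots> \<le> exp (8 * p)" by (rule exp_ge_add_one_self[THEN order_trans[rotated]]) simp
    finally show ?thesis .
  qed
  have gnn: "\<And>b. g b \<ge> 0" by (simp add: g_def)
  have EH: "measure_pmf.expectation M H = (c * (1 + p * (exp 2 - 1)) ^ n + 1) ^ n"
    unfolding M_def bernoulli_matrix_def H_def
    by (subst row_expect[OF _ _ gnn]) (simp_all add: Eg)
  have cbound: "c * (1 + p * (exp 2 - 1)) ^ n \<le> \<epsilon> / 2"
  proof -
    have "c * (1 + p * (exp 2 - 1)) ^ n \<le> c * exp (8 * p) ^ n"
      using cpos assms Eg_le by (intro mult_left_mono power_mono) auto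
    also have "\<dots> = exp (- t + 8 * p * n)" by (simp add: c_def exp_of_nat_mult[symmetric] mult_ac flip: exp_add)
    also have "\<dots> \<le> exp (- 2 * ln (1 / \<epsilon>))" using assms by (simp add: t_def)
    also have "\<dots> = \<epsilon> ^ 2" using assms
      using exp_of_nat_mult[of 2 "ln \<epsilon>"] by (simp add: ln_div mult_ac)
    also have "\<dots> \<le> \<epsilon> / 2" using assms by (simp add: power2_eq_square)
    finally show ?thesis .
  qed
  have base_nn: "0 \<le> 1 + p * (exp 2 - 1)" using assms by simp
  have EH_le: "measure_pmf.expectation M H \<le> exp (\<epsilon> * n / 2)"
  proof -
    have "measure_pmf.expectation M H \<le> (\<epsilon> / 2 + 1) ^ n"
      unfolding EH using cbound cpos base_nn by (intro power_mono) auto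
    also have "\<dots> \<le> exp (\<epsilon> / 2) ^ n"
      using assms by (intro power_mono) (auto intro: exp_ge_add_one_self[THEN order_trans[rotated]] simp: add.commute)
    also have "\<dots> = exp (\<epsilon> * n / 2)" by (simp add: exp_of_nat_mult[symmetric] mult_ac)
    finally show ?thesis .
  qed
  have EexpS: "measure_pmf.expectation M (\<lambda>B. exp (S B)) \<le> exp (\<epsilon> * n / 2)"
    using finM pw by (intro order_trans[OF integral_mono EH_le]) (auto intro: integrable_measure_pmf_finite)
  have markov: "measure_pmf.prob M {B. exp (\<epsilon> * n) \<le> exp (S B)} \<le> measure_pmf.expectation M (\<lambda>B. exp (S B)) / exp (\<epsilon> * n)"
    using integral_Markov_inequality_measure[of M "\<lambda>B. exp (S B)" UNIV "exp (\<epsilon> * n)"] finM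
    by (auto intro: integrable_measure_pmf_finite)
  have bad: "measure_pmf.prob M {B. \<not> S B \<le> \<epsilon> * n} \<le> exp (- \<epsilon> * n / 2)"
  proof -
    have "measure_pmf.prob M {B. \<not> S B \<le> \<epsilon> * n} \<le> measure_pmf.prob M {B. exp (\<epsilon> * n) \<le> exp (S B)}"
      by (intro measure_pmf.finite_measure_mono) auto
    also note markov
    also have "measure_pmf.expectation M (\<lambda>B. exp (S B)) / exp (\<epsilon> * n) \<le> exp (\<epsilon> * n / 2) / exp (\<epsilon> * n)"
      using EexpS by (intro divide_right_mono) auto
    also have "\<dots> = exp (- \<epsilon> * n / 2)" by (simp flip: exp_diff)
    finally show ?thesis .
  qed
  have "measure_pmf.prob M {B. S B \<le> \<epsilon> * n} = 1 - measure_pmf.prob M {B. \<not> S B \<le> \<epsilon> * n}"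
    using measure_pmf.prob_compl[of "{B. \<not> S B \<le> \<epsilon> * n}" M] by (simp add: set_diff_eq)
  with bad show ?thesis by (simp add: M_def S_def t_def)
qed

end
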